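(* Let $n$ be an odd positive integer with $\Phi(n)=\mathcal{F}(n)$. Then $n\in\mathfrak{G}$, i.e. $\sum_{z\in\mathcal{G}_n} z^{\mathcal{F}(n)}\equiv \mathcal{F}(n)\pmod n$ in $\mathbb{Z}[i]/n\mathbb{Z}[i]$.
   Context: For a positive integer $n$, $\mathcal{G}_n=\{a+bi\in\mathbb{Z}[i]/n\mathbb{Z}[i] : a^2+b^2\equiv 1\pmod n\}$ and $\Phi(n)=|\mathcal{G}_n|$. The function $\mathcal{F}$ is defined by $\mathcal{F}(n)=n-1$ if $n\equiv 1\pmod 4$, $\mathcal{F}(n)=n+1$ if $n\equiv 3 \pmod 4$, $\mathcal{F}(n)=n$ otherwise. $\mathfrak{G}=\{n\in\mathbb{N} : \sum_{z\in\mathcal{G}_n} z^{\mathcal{F}(n)}\equiv \mathcal{F}(n)\pmod n\}$. *)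

theory Defs
  imports "HOL-Number_Theory.Number_Theory"
begin

text \<open>The ring Z[i]/nZ[i] is modelled by the representatives (a, b) with 0 \<le> a, b < n,
  and congruence modulo n in Z[i] is componentwise congruence modulo n.\<close>

fun gmul :: "int \<times> int \<Rightarrow> int \<times> int \<Rightarrow> int \<times> int" where
  "gmul (a, b) (c, d) = (a * c - b * d, a * d + b * c)"

fun gpow :: "int \<times> int \<Rightarrow> nat \<Rightarrow> int \<times> int" where
  "gpow z 0 = (1, 0)"
| "gpow z (Suc k) = gmul z (gpow z k)"

definition gcong :: "int \<times> int \<Rightarrow> int \<times> int \<Rightarrow> nat \<Rightarrow> bool" where
  "gcong z w n \<longleftrightarrow> [fst z = fst w] (mod int n) \<and> [snd z = snd w] (mod int n)"

definition Gset :: "nat \<Rightarrow> (int \<times> int) set" where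
  "Gset n = {(a, b). 0 \<le> a \<and> a < int n \<and> 0 \<le> b \<and> b < int n \<and> [a^2 + b^2 = 1] (mod int n)}"

definition PhiG :: "nat \<Rightarrow> nat" where
  "PhiG n = card (Gset n)"

definition FF :: "nat \<Rightarrow> nat" where
  "FF n = (if n mod 4 = 1 then n - 1 else if n mod 4 = 3 then n + 1 else n)"

definition gsum :: "(int \<times> int) set \<Rightarrow> (int \<times> int \<Rightarrow> int \<times> int) \<Rightarrow> int \<times> int" where
  "gsum A f = ((\<Sum>z\<in>A. fst (f z)), (\<Sum>z\<in>A. snd (f z)))"

definition in_frakG :: "nat \<Rightarrow> bool" where
  "in_frakG n \<longleftrightarrow> gcong (gsum (Gset n) (\<lambda>z. gpow z (FF n))) (int (FF n), 0) n"

end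

theory Submission
  imports Defs "HOL-Algebra.Multiplicative_Group"
begin

definition red :: "int \<Rightarrow> int \<times> int \<Rightarrow> int \<times> int" where
  "red N z = (fst z mod N, snd z mod N)"

lemma gmul_comm: "gmul z w = gmul w z"
  by (cases z; cases w) (simp add: algebra_simps)

lemma gmul_assoc: "gmul (gmul x y) z = gmul x (gmul y z)"
  by (cases x; cases y; cases z) (simp add: algebra_simps)

lemma red_gmul_left: "red N (gmul (red N z) w) = red N (gmul z w)"
proof -
  obtain a b where z: "z = (a,b)" by fastforce
  obtain c d where w: "w = (c,d)" by fastforce
  have "[a mod N * c - b mod N * d = a*c - b*d] (mod N)"
    by (intro cong_diff cong_mult cong_refl) (simp_all add: cong_def)
  then have 1: "((a mod N) * c - (b mod N) * d) mod N = (a*c - b*d) mod N" by (simp add: cong_def)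
  have "[a mod N * d + b mod N * c = a*d + b*c] (mod N)"
    by (intro cong_add cong_mult cong_refl) (simp_all add: cong_def)
  then have 2: "((a mod N) * d + (b mod N) * c) mod N = (a*d + b*c) mod N" by (simp add: cong_def)
  show ?thesis using 1 2 by (simp add: z w red_def)
qed

lemma red_gmul_right: "red N (gmul z (red N w)) = red N (gmul z w)"
  by (metis gmul_comm red_gmul_left)

lemma red_red: "red N (red N z) = red N z"
  by (simp add: red_def)

lemma norm_mult: "fst (gmul z w)^2 + snd (gmul z w)^2 = (fst z^2 + snd z^2) * (fst w^2 + snd w^2)"
  by (cases z; cases w) (simp add: algebra_simps power2_eq_square)

lemma mod_self_iff: "(N::int) > 0 \<Longrightarrow> (0 \<le> a \<and> a < N) \<longleftrightarrow> a mod N = a"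
  by (metis pos_mod_bound pos_mod_sign mod_pos_pos_trivial)

lemma Gset_iff:
  assumes "n > 0"
  shows "z \<in> Gset n \<longleftrightarrow> red (int n) z = z \<and> [fst z^2 + snd z^2 = 1] (mod int n)"
proof -
  obtain a b where z: "z = (a,b)" by fastforce
  have "(0 \<le> a \<and> a < int n) \<longleftrightarrow> a mod int n = a" using assms
    using mod_self_iff[of "int n"] by simp
  moreover have "(0 \<le> b \<and> b < int n) \<longleftrightarrow> b mod int n = b" using assms
    using mod_self_iff[of "int n"] by simp
  ultimately show ?thesis by (auto simp: Gset_def z red_def)
qed

lemma norm_red: "[fst (red N z)^2 + snd (red N z)^2 = fst z^2 + snd z^2] (mod N)"
  unfolding red_def
  by (intro cong_add cong_pow) (simp_all add: cong_def)

definition Gm :: "nat \<Rightarrow> (int \<times> int) monoid" where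
  "Gm n = \<lparr>carrier = Gset n, mult = (\<lambda>z w. red (int n) (gmul z w)), one = red (int n) (1,0)\<rparr>"

lemma closed:
  assumes "n > 0" "x \<in> Gset n" "y \<in> Gset n"
  shows "red (int n) (gmul x y) \<in> Gset n"
proof -
  have "[fst x^2 + snd x^2 = 1] (mod int n)" "[fst y^2 + snd y^2 = 1] (mod int n)"
    using assms Gset_iff by auto
  then have "[(fst x^2 + snd x^2) * (fst y^2 + snd y^2) = 1 * 1] (mod int n)"
    using cong_mult by blast
  then have "[fst (gmul x y)^2 + snd (gmul x y)^2 = 1] (mod int n)"
    by (simp add: norm_mult)
  then have "[fst (red (int n) (gmul x y))^2 + snd (red (int n) (gmul x y))^2 = 1] (mod int n)"
    using norm_red cong_trans by blast
  then show ?thesis using assms(1) Gset_iff red_red by blast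
qed

lemma one_closed:
  assumes "n > 0" shows "red (int n) (1,0) \<in> Gset n"
proof -
  have "[fst (red (int n) (1,0))^2 + snd (red (int n) (1,0))^2 = fst (1::int,0::int)^2 + snd (1::int,0::int)^2] (mod int n)"
    by (rule norm_red)
  then show ?thesis using assms Gset_iff red_red by simp
qed

lemma grp:
  assumes "n > 0" shows "group (Gm n)"
proof (rule groupI)
  fix x y assume "x \<in> carrier (Gm n)" "y \<in> carrier (Gm n)"
  then show "x \<otimes>\<^bsub>Gm n\<^esub> y \<in> carrier (Gm n)" using closed assms by (simp add: Gm_def)
next
  show "\<one>\<^bsub>Gm n\<^esub> \<in> carrier (Gm n)" using one_closed assms by (simp add: Gm_def)
next
  fix x y z assume "x \<in> carrier (Gm n)" "y \<in> carrier (Gm n)" "z \<in> carrier (Gm n)"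
  show "x \<otimes>\<^bsub>Gm n\<^esub> y \<otimes>\<^bsub>Gm n\<^esub> z = x \<otimes>\<^bsub>Gm n\<^esub> (y \<otimes>\<^bsub>Gm n\<^esub> z)"
    by (simp add: Gm_def red_gmul_left red_gmul_right gmul_assoc)
next
  fix x assume x: "x \<in> carrier (Gm n)"
  then have "red (int n) x = x" using assms Gset_iff by (simp add: Gm_def)
  moreover have "gmul (1,0) x = x" by (cases x) simp
  ultimately show "\<one>\<^bsub>Gm n\<^esub> \<otimes>\<^bsub>Gm n\<^esub> x = x"
    by (simp add: Gm_def red_gmul_left)
next
  fix x assume x: "x \<in> carrier (Gm n)"
  obtain a b where xe: "x = (a,b)" by fastforce
  have xG: "(a,b) \<in> Gset n" using x xe by (simp add: Gm_def)
  then have nrm: "[a^2 + b^2 = 1] (mod int n)" using assms Gset_iff by auto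
  let ?y = "(a, (-b) mod int n)"
  have yG: "?y \<in> Gset n"
  proof -
    have "red (int n) (a,b) = (a,b)" using xG assms Gset_iff by blast
    then have "red (int n) ?y = ?y" by (simp add: red_def)
    moreover have "[a^2 + ((-b) mod int n)^2 = a^2 + (-b)^2] (mod int n)"
      by (intro cong_add cong_pow) (auto simp: cong_def)
    ultimately show ?thesis using nrm assms Gset_iff
      by (metis cong_trans fst_conv power2_minus snd_conv)
  qed
  have "red (int n) (gmul ?y x) = red (int n) (gmul (a, -b) (a,b))"
  proof -
    have "red (int n) (gmul ?y x) = red (int n) (gmul (red (int n) (a,-b)) x)"
      using xG assms Gset_iff by (simp add: red_def)
    then show ?thesis by (simp add: red_gmul_left xe)
  qed
  also have "\<dots> = red (int n) (a^2+b^2, 0)" by (simp add: power2_eq_square algebra_simps)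
  also have "\<dots> = red (int n) (1, 0)" using nrm by (simp add: red_def cong_def)
  finally show "\<exists>y\<in>carrier (Gm n). y \<otimes>\<^bsub>Gm n\<^esub> x = \<one>\<^bsub>Gm n\<^esub>"
    using yG by (auto simp: Gm_def)
qed

lemma pow_eq:
  assumes "n > 0" "z \<in> Gset n"
  shows "red (int n) (gpow z k) = z [^]\<^bsub>Gm n\<^esub> k"
proof (induction k)
  case 0 then show ?case by (simp add: Gm_def)
next
  case (Suc k)
  have rz: "red (int n) z = z" using assms Gset_iff by blast
  have "red (int n) (gpow z (Suc k)) = red (int n) (gmul (gpow z k) z)"
    by (simp add: gmul_comm)
  also have "\<dots> = red (int n) (gmul (red (int n) (gpow z k)) z)"
    by (simp add: red_gmul_left)
  also have "\<dots> = z [^]\<^bsub>Gm n\<^esub> k \<otimes>\<^bsub>Gm n\<^esub> z" using Suc by (simp add: Gm_def)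
  finally show ?case by simp
qed

theorem mainTheorem15:
  fixes n :: nat
  assumes "n > 0" and "odd n" and "PhiG n = FF n"
  shows "in_frakG n"
proof -
  interpret group "Gm n" using grp assms(1) .
  have ord: "order (Gm n) = FF n" using assms(3) by (simp add: order_def Gm_def PhiG_def)
  have key: "red (int n) (gpow z (FF n)) = red (int n) (1,0)" if z: "z \<in> Gset n" for z
  proof -
    have "red (int n) (gpow z (FF n)) = z [^]\<^bsub>Gm n\<^esub> order (Gm n)"
      using pow_eq[OF assms(1) z] ord by simp
    also have "\<dots> = \<one>\<^bsub>Gm n\<^esub>" using pow_order_eq_1 z by (simp add: Gm_def)
    finally show ?thesis by (simp add: Gm_def)
  qed
  have fin: "finite (Gset n)"
    by (rule finite_subset[of _ "{0..<int n} \<times> {0..<int n}"]) (auto simp: Gset_def)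
  have c1: "[(\<Sum>z\<in>Gset n. fst (gpow z (FF n))) = (\<Sum>z\<in>Gset n. 1)] (mod int n)"
    by (rule cong_sum) (use key in \<open>auto simp: red_def cong_def\<close>)
  have c2: "[(\<Sum>z\<in>Gset n. snd (gpow z (FF n))) = (\<Sum>z\<in>Gset n. 0)] (mod int n)"
    by (rule cong_sum) (use key in \<open>auto simp: red_def cong_def\<close>)
  have "(\<Sum>z\<in>Gset n. (1::int)) = int (FF n)" using assms(3) by (simp add: PhiG_def)
  then show ?thesis using c1 c2
    by (simp add: in_frakG_def gcong_def gsum_def)
qed

end
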